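(* Let $F:\mathbb{R}^d\to\mathbb{R}^d$ be $L$-Lipschitz, $G:\mathbb{R}^d\rightrightarrows\mathbb{R}^d$ maximally monotone, the solution set of $0\in F(x)+G(x)$ nonempty, and $F+G$ maximally $\rho$-cohypomonotone with $\rho>0$. Let $\eta>\rho$, $\alpha=1-\frac\rho\eta$, $\beta_k=\frac1{k+2}$, $x_0\in\mathbb{R}^d$, and let $x^\star$ be a solution. Suppose the sequence $(x_k)$ satisfies $x_{k+1}=\beta_kx_0+(1-\beta_k)\big((1-\alpha)x_k+\alpha\widetilde J_k\big)$ for $k\ge0$, where the points $\widetilde J_k\in\mathbb{R}^d$ satisfy $\|J_{\eta(F+G)}(x_k)-\widetilde J_k\|\le\varepsilon_k$ for some $\varepsilon_k>0$. Let $R=\mathrm{Id}-J_{\eta(F+G)}$. Then for any $K\ge1$, $$\frac{K(K+1)}{4}\|R(x_K)\|^2-\frac{K+1}{K\alpha^2}\|x^\star-x_0\|^2\le\sum_{k=0}^{K-1}\left(\frac{(k+1)(k+2)\varepsilon_k^2}{2}+(k+1)\|R(x_k)\|\varepsilon_k\right),$$ and $\|x_k-x^\star\|\le\|x_0-x^\star\|+\frac{\alpha}{k+1}\sum_{i=0}^{k-1}(i+1)\varepsilon_i$.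
   Context: For an operator $A$, $J_A=(\mathrm{Id}+A)^{-1}$ is its resolvent. $F+G$ is $\rho$-cohypomonotone if $\langle u-v,x-y\rangle\ge-\rho\|u-v\|^2$ for all $(x,u),(y,v)$ in its graph; maximal means its graph is not strictly contained in the graph of another $\rho$-cohypomonotone operator. *)

theory Defs
  imports "HOL-Analysis.Analysis"
begin

text \<open>Set-valued operators on a real inner product space are modelled as
  functions 'a => 'a set (x maps to A x; the graph is the set of (x,u) with u in A x).\<close>

definition monotone_op :: "('a::real_inner \<Rightarrow> 'a set) \<Rightarrow> bool" where
  "monotone_op A \<longleftrightarrow>
     (\<forall>x y u v. u \<in> A x \<longrightarrow> v \<in> A y \<longrightarrow> inner (u - v) (x - y) \<ge> 0)"

definition maximal_monotone_op :: "('a::real_inner \<Rightarrow> 'a set) \<Rightarrow> bool" where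
  "maximal_monotone_op A \<longleftrightarrow> monotone_op A \<and>
     (\<forall>B. monotone_op B \<and> (\<forall>x. A x \<subseteq> B x) \<longrightarrow> B = A)"

definition cohypomonotone_op :: "real \<Rightarrow> ('a::real_inner \<Rightarrow> 'a set) \<Rightarrow> bool" where
  "cohypomonotone_op \<rho> A \<longleftrightarrow>
     (\<forall>x y u v. u \<in> A x \<longrightarrow> v \<in> A y \<longrightarrow>
        inner (u - v) (x - y) \<ge> - \<rho> * (norm (u - v))\<^sup>2)"

definition maximal_cohypomonotone_op :: "real \<Rightarrow> ('a::real_inner \<Rightarrow> 'a set) \<Rightarrow> bool" where
  "maximal_cohypomonotone_op \<rho> A \<longleftrightarrow> cohypomonotone_op \<rho> A \<and>
     (\<forall>B. cohypomonotone_op \<rho> B \<and> (\<forall>x. A x \<subseteq> B x) \<longrightarrow> B = A)"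

definition sum_op :: "('a::real_vector \<Rightarrow> 'a) \<Rightarrow> ('a \<Rightarrow> 'a set) \<Rightarrow> 'a \<Rightarrow> 'a set" where
  "sum_op F G x = (\<lambda>u. F x + u) ` G x"

definition scale_op :: "real \<Rightarrow> ('a::real_vector \<Rightarrow> 'a set) \<Rightarrow> 'a \<Rightarrow> 'a set" where
  "scale_op c A x = (\<lambda>u. c *\<^sub>R u) ` A x"

text \<open>Resolvent J_A = (Id + A)^{-1}, evaluated at x: the (unique, when it exists)
  point y with x in y + A y.\<close>
definition resolvent :: "('a::real_vector \<Rightarrow> 'a set) \<Rightarrow> 'a \<Rightarrow> 'a" where
  "resolvent A x = (THE y. x - y \<in> A y)"

end

theory Submission
  imports Defs
begin
lemma finite_DF:
  fixes P :: "('a::euclidean_space \<times> 'a) set"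
  assumes fin: "finite P" and ne: "P \<noteq> {}"
    and mono: "\<And>p q. p \<in> P \<Longrightarrow> q \<in> P \<Longrightarrow> inner (snd p - snd q) (fst p - fst q) \<ge> 0"
  shows "\<exists>x. \<forall>p\<in>P. inner (x + snd p) (fst p - x) \<ge> 0"
proof (rule ccontr)
  assume "\<not> ?thesis"
  then have bad: "\<And>x. \<exists>p\<in>P. inner (x + snd p) (x - fst p) > 0"
    by (metis inner_minus_right linorder_not_le minus_diff_eq neg_0_less_iff_less)
  define g :: "'a \<times> 'a \<Rightarrow> 'a \<Rightarrow> real" where "g p x = inner (x + snd p) (x - fst p)" for p x
  define m :: "'a \<times> 'a \<Rightarrow> 'a \<Rightarrow> real" where "m p x = max 0 (g p x)" for p x
  define D :: "'a \<Rightarrow> real" where "D x = (\<Sum>p\<in>P. m p x)" for x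
  have Dpos: "D x > 0" for x
  proof -
    obtain p where p: "p \<in> P" "g p x > 0" using bad[of x] by (auto simp: g_def)
    have "m p x \<le> D x" unfolding D_def
      by (rule member_le_sum) (auto simp: m_def p fin)
    moreover have "m p x > 0" using p by (simp add: m_def)
    ultimately show ?thesis by simp
  qed
  define f where "f x = (\<Sum>p\<in>P. (m p x / D x) *\<^sub>R fst p)" for x
  define C where "C = convex hull (fst ` P)"
  have sum1: "(\<Sum>p\<in>P. m p x / D x) = 1" for x
    using Dpos[of x] by (simp add: D_def flip: sum_divide_distrib)
  have cm: "continuous_on C (m p)" for p
    unfolding m_def g_def by (intro continuous_intros)
  have cD: "continuous_on C D"
    unfolding D_def by (intro continuous_on_sum cm)
  have cont: "continuous_on C f"
    unfolding f_def
    by (intro continuous_on_sum continuous_on_scaleR continuous_on_divide cm cD continuous_on_const)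
      (use Dpos in \<open>auto simp: less_le\<close>)
  have fim: "f \<in> C \<rightarrow> C"
  proof
    fix x show "f x \<in> C" unfolding f_def C_def
      by (rule convex_sum[OF fin]) (use sum1[of x] Dpos[of x] in \<open>auto simp: m_def hull_inc\<close>)
  qed
  obtain x where "x \<in> C" and fx: "f x = x"
    using brouwer[of C f] cont fim fin ne
    by (auto simp: C_def finite_imp_compact_convex_hull convex_convex_hull)
  define \<beta> where "\<beta> p = m p x / D x" for p
  have b1: "(\<Sum>p\<in>P. \<beta> p) = 1" using sum1 by (simp add: \<beta>_def)
  have xeq: "x = (\<Sum>p\<in>P. \<beta> p *\<^sub>R fst p)" using fx by (simp add: f_def \<beta>_def)
  have A: "(\<Sum>p\<in>P. \<beta> p * g p x) > 0"
  proof -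
    have "(\<Sum>p\<in>P. \<beta> p * g p x) = (\<Sum>p\<in>P. (m p x)\<^sup>2) / D x"
      unfolding \<beta>_def sum_divide_distrib
      by (rule sum.cong) (auto simp: m_def power2_eq_square max_def)
    moreover have "(\<Sum>p\<in>P. (m p x)\<^sup>2) > 0"
    proof -
      obtain p where p: "p \<in> P" "g p x > 0" using bad[of x] by (auto simp: g_def)
      have "(m p x)\<^sup>2 \<le> (\<Sum>p\<in>P. (m p x)\<^sup>2)"
        by (rule member_le_sum) (auto simp: p fin)
      moreover have "(m p x)\<^sup>2 > 0" using p by (simp add: m_def)
      ultimately show ?thesis by linarith
    qed
    ultimately show ?thesis using Dpos[of x] by simp
  qed
  have xd: "x - fst p = (\<Sum>q\<in>P. \<beta> q *\<^sub>R (fst q - fst p))" for p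
  proof -
    have "(\<Sum>q\<in>P. \<beta> q *\<^sub>R (fst q - fst p)) = x - (\<Sum>q\<in>P. \<beta> q) *\<^sub>R fst p"
      by (simp add: xeq scaleR_diff_right sum_subtractf scaleR_sum_left)
    then show ?thesis using b1 by simp
  qed
  have "(\<Sum>p\<in>P. \<beta> p * g p x)
      = (\<Sum>p\<in>P. \<beta> p * inner x (x - fst p)) + (\<Sum>p\<in>P. \<beta> p * inner (snd p) (x - fst p))"
    by (simp add: g_def inner_add_left distrib_left sum.distrib)
  also have "(\<Sum>p\<in>P. \<beta> p * inner x (x - fst p)) = inner x (x - (\<Sum>p\<in>P. \<beta> p *\<^sub>R fst p))"
  proof -
    have "(\<Sum>p\<in>P. \<beta> p * inner x (x - fst p)) = (\<Sum>p\<in>P. \<beta> p) * inner x x - (\<Sum>p\<in>P. \<beta> p * inner x (fst p))"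
      by (simp add: inner_diff_right right_diff_distrib sum_subtractf sum_distrib_right)
    then show ?thesis using b1 by (simp add: inner_diff_right inner_sum_right)
  qed
  also have "\<dots> = 0" using xeq by simp
  also have "(\<Sum>p\<in>P. \<beta> p * inner (snd p) (x - fst p))
      = (\<Sum>p\<in>P. \<Sum>q\<in>P. \<beta> p * \<beta> q * inner (snd p) (fst q - fst p))"
    by (simp add: xd inner_sum_right sum_distrib_left mult.assoc)
  finally have T: "(\<Sum>p\<in>P. \<beta> p * g p x) = (\<Sum>p\<in>P. \<Sum>q\<in>P. \<beta> p * \<beta> q * inner (snd p) (fst q - fst p))"
    by simp
  also have "\<dots> = (\<Sum>p\<in>P. \<Sum>q\<in>P. \<beta> q * \<beta> p * inner (snd q) (fst p - fst q))"
    by (rule sum.swap)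
  finally have "2 * (\<Sum>p\<in>P. \<beta> p * g p x) =
     (\<Sum>p\<in>P. \<Sum>q\<in>P. \<beta> p * \<beta> q * inner (snd p) (fst q - fst p) + \<beta> q * \<beta> p * inner (snd q) (fst p - fst q))"
    using T by (simp add: sum.distrib)
  also have "\<dots> = (\<Sum>p\<in>P. \<Sum>q\<in>P. - (\<beta> p * \<beta> q * inner (snd p - snd q) (fst p - fst q)))"
    by (intro sum.cong refl) (simp add: inner_diff_left inner_diff_right algebra_simps)
  also have "\<dots> \<le> 0"
  proof -
    have "\<beta> p \<ge> 0" for p using Dpos[of x] by (simp add: \<beta>_def m_def)
    then show ?thesis
      by (intro sum_nonpos) (simp add: mono)
  qed
  finally show False using A by simp
qed

lemma ball_ident:
  fixes x y v :: "'a::real_inner"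
  shows "inner (x + v) (y - x) = (norm ((y + v) /\<^sub>R 2))\<^sup>2 - (norm (x - (y - v) /\<^sub>R 2))\<^sup>2"
  unfolding power2_norm_eq_inner
  by (simp add: inner_add_left inner_add_right inner_diff_left inner_diff_right inner_commute algebra_simps)

lemma minty:
  fixes S :: "('a::euclidean_space \<times> 'a) set"
  assumes ne: "S \<noteq> {}"
    and mono: "\<And>p q. p \<in> S \<Longrightarrow> q \<in> S \<Longrightarrow> inner (snd p - snd q) (fst p - fst q) \<ge> 0"
    and max: "\<And>x u. (\<And>p. p \<in> S \<Longrightarrow> inner (u - snd p) (x - fst p) \<ge> 0) \<Longrightarrow> (x, u) \<in> S"
  shows "\<exists>x. (x, -x) \<in> S"
proof -
  define K :: "'a \<times> 'a \<Rightarrow> 'a set" where "K p = {x. inner (x + snd p) (fst p - x) \<ge> 0}" for p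
  have Kc: "K p = cball ((fst p - snd p) /\<^sub>R 2) (norm ((fst p + snd p) /\<^sub>R 2))" for p
  proof -
    have "x \<in> K p \<longleftrightarrow> (norm (x - (fst p - snd p) /\<^sub>R 2))\<^sup>2 \<le> (norm ((fst p + snd p) /\<^sub>R 2))\<^sup>2" for x
      unfolding K_def mem_Collect_eq ball_ident[of x "snd p" "fst p"] by (rule diff_ge_0_iff_ge)
    also have "\<dots> x \<longleftrightarrow> norm (x - (fst p - snd p) /\<^sub>R 2) \<le> norm ((fst p + snd p) /\<^sub>R 2)" for x
      by (metis abs_le_square_iff abs_norm_cancel)
    finally have "x \<in> K p \<longleftrightarrow> dist x ((fst p - snd p) /\<^sub>R 2) \<le> norm ((fst p + snd p) /\<^sub>R 2)" for x
      by (simp only: dist_norm)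
    then show ?thesis unfolding set_eq_iff mem_cball by (metis dist_commute)
  qed
  obtain p0 where p0: "p0 \<in> S" using ne by blast
  have "K p0 \<inter> (\<Inter>p\<in>S. K p) \<noteq> {}"
  proof (rule compact_imp_fip_image)
    show "compact (K p0)" by (simp add: Kc)
    show "closed (K p)" for p by (simp add: Kc)
    fix I assume I: "finite I" "I \<subseteq> S"
    obtain x where "\<forall>p\<in>insert p0 I. inner (x + snd p) (fst p - x) \<ge> 0"
    proof -
      have "\<exists>x. \<forall>p\<in>insert p0 I. inner (x + snd p) (fst p - x) \<ge> 0"
      proof (rule finite_DF)
        show "finite (insert p0 I)" using I by simp
        show "insert p0 I \<noteq> {}" by simp
        fix p q assume "p \<in> insert p0 I" "q \<in> insert p0 I"
        then have "p \<in> S" "q \<in> S" using I p0 by auto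
        then show "inner (snd p - snd q) (fst p - fst q) \<ge> 0" by (rule mono)
      qed
      then show ?thesis using that by blast
    qed
    then have "x \<in> K p0 \<inter> (\<Inter>p\<in>I. K p)" by (auto simp: K_def)
    then show "K p0 \<inter> (\<Inter>p\<in>I. K p) \<noteq> {}" by blast
  qed
  then obtain x where x: "\<And>p. p \<in> S \<Longrightarrow> x \<in> K p" by blast
  have "(x, -x) \<in> S"
  proof (rule max)
    fix p assume "p \<in> S"
    then have "inner (x + snd p) (fst p - x) \<ge> 0" using x by (auto simp: K_def)
    moreover have "inner (- x - snd p) (x - fst p) = inner (x + snd p) (fst p - x)"
    proof -
      have "- x - snd p = -(x + snd p)" "x - fst p = -(fst p - x)" by simp_all
      then show ?thesis by (simp only: inner_minus_left inner_minus_right minus_minus)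
    qed
    ultimately show "inner (- x - snd p) (x - fst p) \<ge> 0" by simp
  qed
  then show ?thesis by blast
qed

lemma step_ineq:
  fixes g h w d y :: "'a::real_inner" and a b \<epsilon> :: real
  assumes a: "a > 0" and b: "b \<ge> 0"
    and E: "(b + 2) *\<^sub>R y = (b + 1) *\<^sub>R (d - a *\<^sub>R g + a *\<^sub>R w)"
    and coco: "inner (h - g) (y - d) \<ge> a * (norm (h - g))\<^sup>2"
    and w: "norm w \<le> \<epsilon>"
  shows "a\<^sup>2 * ((b + 1) * (b + 2) / 2) * (norm h)\<^sup>2 + a * (b + 2) * inner h y
     \<le> a\<^sup>2 * (b * (b + 1) / 2) * (norm g)\<^sup>2 + a * (b + 1) * inner g d
        + a\<^sup>2 * ((b + 1) * (b + 2) * \<epsilon>\<^sup>2 / 2 + (b + 1) * norm g * \<epsilon>)"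
proof -
  define hy where "hy = inner h y"
  define gy where "gy = inner g y"
  define hd where "hd = inner h d"
  define gd where "gd = inner g d"
  define hh where "hh = inner h h"
  define gg where "gg = inner g g"
  define hg where "hg = inner h g"
  define hw where "hw = inner h w"
  define gw where "gw = inner g w"
  define ww where "ww = inner w w"
  have Eh: "(b + 2) * hy = (b + 1) * (hd - a * hg + a * hw)"
  proof -
    have "inner h ((b + 2) *\<^sub>R y) = inner h ((b + 1) *\<^sub>R (d - a *\<^sub>R g + a *\<^sub>R w))" using E by simp
    then show ?thesis by (simp add: hy_def hd_def hg_def hw_def inner_add_right inner_diff_right)
  qed
  have Eg: "(b + 2) * gy = (b + 1) * (gd - a * gg + a * gw)"
  proof -
    have "inner g ((b + 2) *\<^sub>R y) = inner g ((b + 1) *\<^sub>R (d - a *\<^sub>R g + a *\<^sub>R w))" using E by simp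
    then show ?thesis by (simp add: gy_def gd_def gg_def gw_def inner_add_right inner_diff_right)
  qed
  define Q where "Q = hy - gy - hd + gd - a * (hh - 2 * hg + gg)"
  have Q: "Q \<ge> 0"
    using coco unfolding Q_def power2_norm_eq_inner
    by (simp add: hy_def gy_def hd_def gd_def hh_def gg_def hg_def inner_diff_left inner_diff_right
        inner_commute algebra_simps)
  define N where "N = hh + gg + ww - 2 * hg - 2 * hw + 2 * gw"
  have N: "N \<ge> 0"
  proof -
    have "0 \<le> inner (h - g - w) (h - g - w)" by simp
    then show ?thesis
      by (simp add: N_def hh_def gg_def ww_def hg_def hw_def gw_def inner_diff_left inner_diff_right
          inner_commute algebra_simps)
  qed
  have ww: "ww \<le> \<epsilon>\<^sup>2"
  proof -
    have "ww = (norm w)\<^sup>2" by (simp add: ww_def power2_norm_eq_inner)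
    also have "\<dots> \<le> \<epsilon>\<^sup>2" using w by (simp add: power_mono)
    finally show ?thesis .
  qed
  have gw: "gw \<le> norm g * \<epsilon>"
  proof -
    have "gw \<le> norm g * norm w" unfolding gw_def by (rule norm_cauchy_schwarz)
    also have "\<dots> \<le> norm g * \<epsilon>" using w by (simp add: mult_left_mono)
    finally show ?thesis .
  qed
  have ngg: "(norm g)\<^sup>2 = gg" "(norm h)\<^sup>2 = hh" by (simp_all add: gg_def hh_def power2_norm_eq_inner)
  define E1 where "E1 = (b+1) * (hd - a * hg + a * hw) - (b + 1) * (gd - a * gg + a * gw)
          - (b + 2) * hd + (b + 2) * gd - (b + 2) * a * (hh - 2 * hg + gg)"
  have FQ: "(b + 2) * Q = E1"
    unfolding Q_def E1_def using Eh Eg by (simp add: algebra_simps)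
  have FH: "a * (b + 2) * hy = a * ((b + 1) * (hd - a * hg + a * hw))"
    using Eh by simp
  have ident0: "a\<^sup>2 * ((b + 1) * (b + 2) / 2) * hh + a * ((b + 1) * (hd - a * hg + a * hw))
      - (a\<^sup>2 * (b * (b + 1) / 2) * gg + a * (b + 1) * gd)
     = - a * (b + 1) * E1 - a\<^sup>2 * (b + 1) * (b + 2) / 2 * N
       + a\<^sup>2 * (b + 1) * (b + 2) / 2 * ww + a\<^sup>2 * (b + 1) * gw"
    unfolding N_def E1_def by (simp add: field_simps power2_eq_square)
  have ident: "a\<^sup>2 * ((b + 1) * (b + 2) / 2) * hh + a * (b + 2) * hy
      - (a\<^sup>2 * (b * (b + 1) / 2) * gg + a * (b + 1) * gd)
     = - a * (b + 1) * ((b + 2) * Q) - a\<^sup>2 * (b + 1) * (b + 2) / 2 * N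
       + a\<^sup>2 * (b + 1) * (b + 2) / 2 * ww + a\<^sup>2 * (b + 1) * gw"
    unfolding FH FQ by (rule ident0)
  have t1: "a * (b + 1) * ((b + 2) * Q) \<ge> 0" using a b Q by simp
  have t2: "a\<^sup>2 * (b + 1) * (b + 2) / 2 * N \<ge> 0" using b N by simp
  have t3: "a\<^sup>2 * (b + 1) * (b + 2) / 2 * ww \<le> a\<^sup>2 * ((b + 1) * (b + 2) * \<epsilon>\<^sup>2 / 2)"
  proof -
    have c0: "0 \<le> a\<^sup>2 * (b + 1) * (b + 2) / 2" using b by simp
    from mult_left_mono[OF ww c0] show ?thesis by (simp add: algebra_simps)
  qed
  have t4: "a\<^sup>2 * (b + 1) * gw \<le> a\<^sup>2 * ((b + 1) * norm g * \<epsilon>)"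
  proof -
    have c0: "0 \<le> a\<^sup>2 * (b + 1)" using b by simp
    from mult_left_mono[OF gw c0] show ?thesis by (simp add: algebra_simps)
  qed
  have dd: "a\<^sup>2 * ((b + 1) * (b + 2) * \<epsilon>\<^sup>2 / 2 + (b + 1) * norm g * \<epsilon>)
     = a\<^sup>2 * ((b + 1) * (b + 2) * \<epsilon>\<^sup>2 / 2) + a\<^sup>2 * ((b + 1) * norm g * \<epsilon>)"
    by (simp add: distrib_left)
  show ?thesis unfolding ngg hy_def[symmetric] gd_def[symmetric] dd
    using ident t1 t2 t3 t4 by linarith
qed

lemma halpern:
  fixes R :: "'a::real_inner \<Rightarrow> 'a" and x e :: "nat \<Rightarrow> 'a" and \<epsilon> :: "nat \<Rightarrow> real"
  assumes coco: "\<And>z z'. inner (R z - R z') (z - z') \<ge> \<alpha> * (norm (R z - R z'))\<^sup>2"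
    and a: "\<alpha> > 0" and Rs: "R xstar = 0"
    and iter: "\<And>k. x (Suc k) = (1 / (real k + 2)) *\<^sub>R x 0
                 + (1 - 1 / (real k + 2)) *\<^sub>R (x k - \<alpha> *\<^sub>R R (x k) + \<alpha> *\<^sub>R e k)"
    and ee: "\<And>k. norm (e k) \<le> \<epsilon> k"
  shows "(\<forall>K\<ge>1.
            real K * (real K + 1) / 4 * (norm (R (x K)))\<^sup>2
            - (real K + 1) / (real K * \<alpha>\<^sup>2) * (norm (xstar - x 0))\<^sup>2
          \<le> (\<Sum>k<K. (real k + 1) * (real k + 2) * (\<epsilon> k)\<^sup>2 / 2
                 + (real k + 1) * norm (R (x k)) * \<epsilon> k))
       \<and> (\<forall>k. norm (x k - xstar) \<le> norm (x 0 - xstar)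
                 + \<alpha> / (real k + 1) * (\<Sum>i<k. (real i + 1) * \<epsilon> i))"
proof
  define V where "V k = \<alpha>\<^sup>2 * (real k * (real k + 1) / 2) * (norm (R (x k)))\<^sup>2
      + \<alpha> * (real k + 1) * inner (R (x k)) (x k - x 0)" for k
  define Er where "Er k = (real k + 1) * (real k + 2) * (\<epsilon> k)\<^sup>2 / 2
                 + (real k + 1) * norm (R (x k)) * \<epsilon> k" for k
  have step: "V (Suc k) \<le> V k + \<alpha>\<^sup>2 * Er k" for k
  proof -
    define b where "b = real k"
    have b: "b \<ge> 0" by (simp add: b_def)
    have E: "(b + 2) *\<^sub>R (x (Suc k) - x 0) = (b + 1) *\<^sub>R ((x k - x 0) - \<alpha> *\<^sub>R R (x k) + \<alpha> *\<^sub>R e k)"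
    proof -
      have "(b + 2) *\<^sub>R x (Suc k) = x 0 + (b + 1) *\<^sub>R (x k - \<alpha> *\<^sub>R R (x k) + \<alpha> *\<^sub>R e k)"
      proof -
        have "(b + 2) *\<^sub>R x (Suc k) = ((b + 2) * (1 / (b + 2))) *\<^sub>R x 0
            + ((b + 2) * (1 - 1 / (b + 2))) *\<^sub>R (x k - \<alpha> *\<^sub>R R (x k) + \<alpha> *\<^sub>R e k)"
          by (subst iter) (simp add: b_def scaleR_add_right)
        also have "(b + 2) * (1 / (b + 2)) = 1" using b by simp
        also have "(b + 2) * (1 - 1 / (b + 2)) = b + 1" using b by (simp add: field_simps)
        finally show ?thesis by simp
      qed
      then show ?thesis by (simp add: algebra_simps scaleR_2)
    qed
    have co: "inner (R (x (Suc k)) - R (x k)) ((x (Suc k) - x 0) - (x k - x 0)) \<ge> \<alpha> * (norm (R (x (Suc k)) - R (x k)))\<^sup>2"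
      using coco[of "x (Suc k)" "x k"] by simp
    have "\<alpha>\<^sup>2 * ((b + 1) * (b + 2) / 2) * (norm (R (x (Suc k))))\<^sup>2 + \<alpha> * (b + 2) * inner (R (x (Suc k))) (x (Suc k) - x 0)
     \<le> \<alpha>\<^sup>2 * (b * (b + 1) / 2) * (norm (R (x k)))\<^sup>2 + \<alpha> * (b + 1) * inner (R (x k)) (x k - x 0)
        + \<alpha>\<^sup>2 * ((b + 1) * (b + 2) * (\<epsilon> k)\<^sup>2 / 2 + (b + 1) * norm (R (x k)) * \<epsilon> k)"
      by (rule step_ineq[OF a b E co ee])
    moreover have "real (Suc k) = b + 1" "real (Suc k) + 1 = b + 2" by (simp_all add: b_def)
    ultimately show ?thesis unfolding V_def Er_def b_def by (simp add: algebra_simps)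
  qed
  have V0: "V 0 = 0" by (simp add: V_def)
  have Vsum: "V K \<le> \<alpha>\<^sup>2 * (\<Sum>k<K. Er k)" for K
  proof (induction K)
    case 0 then show ?case by (simp add: V0)
  next
    case (Suc K) then show ?case using step[of K] by (simp add: distrib_left)
  qed
  show "\<forall>K\<ge>1. real K * (real K + 1) / 4 * (norm (R (x K)))\<^sup>2
            - (real K + 1) / (real K * \<alpha>\<^sup>2) * (norm (xstar - x 0))\<^sup>2
          \<le> (\<Sum>k<K. (real k + 1) * (real k + 2) * (\<epsilon> k)\<^sup>2 / 2
                 + (real k + 1) * norm (R (x k)) * \<epsilon> k)"
  proof (intro allI impI)
    fix K :: nat assume K: "K \<ge> 1"
    define r where "r = norm (R (x K))"
    define D where "D = norm (xstar - x 0)"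
    define k where "k = real K"
    have k: "k \<ge> 1" using K by (simp add: k_def)
    have i1: "inner (R (x K)) (x K - xstar) \<ge> 0"
    proof -
      have "inner (R (x K)) (x K - xstar) \<ge> \<alpha> * (norm (R (x K)))\<^sup>2" using coco[of "x K" xstar] Rs by simp
      moreover have "\<alpha> * (norm (R (x K)))\<^sup>2 \<ge> 0" using a by simp
      ultimately show ?thesis by linarith
    qed
    have i2: "inner (R (x K)) (xstar - x 0) \<ge> - (r * D)"
    proof -
      have "inner (R (x K)) (-(xstar - x 0)) \<le> norm (R (x K)) * norm (-(xstar - x 0))"
        by (rule norm_cauchy_schwarz)
      then show ?thesis unfolding r_def D_def inner_minus_right norm_minus_cancel by linarith
    qed
    have "inner (R (x K)) (x K - x 0) = inner (R (x K)) (x K - xstar) + inner (R (x K)) (xstar - x 0)"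
      by (simp add: inner_diff_right)
    then have i3: "inner (R (x K)) (x K - x 0) \<ge> - (r * D)" using i1 i2 by linarith
    have VK: "V K \<ge> \<alpha>\<^sup>2 * (k * (k + 1) / 2) * r\<^sup>2 - \<alpha> * (k + 1) * (r * D)"
    proof -
      have "\<alpha> * (k + 1) * inner (R (x K)) (x K - x 0) \<ge> \<alpha> * (k + 1) * (- (r * D))"
        using i3 a k by (intro mult_left_mono) auto
      then show ?thesis unfolding V_def r_def k_def by simp
    qed
    have amgm: "\<alpha> * (k + 1) * (r * D) \<le> \<alpha>\<^sup>2 * (k * (k + 1) / 4) * r\<^sup>2 + (k + 1) / k * D\<^sup>2"
    proof -
      have eq: "k * ((\<alpha>\<^sup>2 * (k * (k + 1) / 4) * r\<^sup>2 + (k + 1) / k * D\<^sup>2) - \<alpha> * (k + 1) * (r * D))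
          = (k + 1) * (\<alpha> * k * r / 2 - D)\<^sup>2"
        using k by (simp add: field_simps power2_eq_square)
      have "0 \<le> (k + 1) * (\<alpha> * k * r / 2 - D)\<^sup>2" using k by simp
      then have "0 \<le> k * ((\<alpha>\<^sup>2 * (k * (k + 1) / 4) * r\<^sup>2 + (k + 1) / k * D\<^sup>2) - \<alpha> * (k + 1) * (r * D))"
        unfolding eq .
      then show ?thesis using k by (simp add: zero_le_mult_iff)
    qed
    have "\<alpha>\<^sup>2 * (k * (k + 1) / 4 * r\<^sup>2 - (k + 1) / (k * \<alpha>\<^sup>2) * D\<^sup>2)
        = \<alpha>\<^sup>2 * (k * (k + 1) / 2) * r\<^sup>2 - (\<alpha>\<^sup>2 * (k * (k + 1) / 4) * r\<^sup>2 + (k + 1) / k * D\<^sup>2)"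
      using a k by (simp add: field_simps power2_eq_square)
    also have "\<dots> \<le> V K" using VK amgm by linarith
    also have "\<dots> \<le> \<alpha>\<^sup>2 * (\<Sum>k<K. Er k)" by (rule Vsum)
    finally have "k * (k + 1) / 4 * r\<^sup>2 - (k + 1) / (k * \<alpha>\<^sup>2) * D\<^sup>2 \<le> (\<Sum>k<K. Er k)"
      using a by (simp add: mult_le_cancel_left)
    then show "real K * (real K + 1) / 4 * (norm (R (x K)))\<^sup>2
            - (real K + 1) / (real K * \<alpha>\<^sup>2) * (norm (xstar - x 0))\<^sup>2
          \<le> (\<Sum>k<K. (real k + 1) * (real k + 2) * (\<epsilon> k)\<^sup>2 / 2
                 + (real k + 1) * norm (R (x k)) * \<epsilon> k)"
      by (simp add: k_def r_def D_def Er_def)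
  qed
next
  have nexp: "norm (z - \<alpha> *\<^sub>R R z - xstar) \<le> norm (z - xstar)" for z
  proof -
    define q where "q = R z"
    have c: "inner q (z - xstar) \<ge> \<alpha> * (norm q)\<^sup>2" using coco[of z xstar] Rs by (simp add: q_def)
    have "(norm (z - \<alpha> *\<^sub>R q - xstar))\<^sup>2 = (norm (z - xstar))\<^sup>2 - 2 * \<alpha> * inner q (z - xstar) + \<alpha>\<^sup>2 * (norm q)\<^sup>2"
      unfolding power2_norm_eq_inner
      by (simp add: inner_diff_left inner_diff_right inner_commute power2_eq_square algebra_simps)
    also have "\<dots> \<le> (norm (z - xstar))\<^sup>2"
    proof -
      have "2 * \<alpha> * inner q (z - xstar) \<ge> 2 * \<alpha> * (\<alpha> * (norm q)\<^sup>2)" using c a by simp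
      moreover have "2 * \<alpha> * (\<alpha> * (norm q)\<^sup>2) = 2 * (\<alpha>\<^sup>2 * (norm q)\<^sup>2)" by (simp add: power2_eq_square)
      moreover have "\<alpha>\<^sup>2 * (norm q)\<^sup>2 \<ge> 0" by simp
      ultimately show ?thesis by linarith
    qed
    finally show ?thesis unfolding q_def by (simp add: power2_le_iff_abs_le)
  qed
  show "\<forall>k. norm (x k - xstar) \<le> norm (x 0 - xstar) + \<alpha> / (real k + 1) * (\<Sum>i<k. (real i + 1) * \<epsilon> i)"
  proof
    fix k show "norm (x k - xstar) \<le> norm (x 0 - xstar) + \<alpha> / (real k + 1) * (\<Sum>i<k. (real i + 1) * \<epsilon> i)"
    proof (induction k)
      case 0 then show ?case by simp
    next
      case (Suc k)
      define b where "b = real k"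
      define s where "s = 1 / (b + 2)"
      define D where "D = norm (x 0 - xstar)"
      define S where "S = (\<Sum>i<k. (real i + 1) * \<epsilon> i)"
      have b: "b \<ge> 0" by (simp add: b_def)
      have s: "0 \<le> s" "s \<le> 1" using b by (auto simp: s_def)
      have "x (Suc k) - xstar = s *\<^sub>R (x 0 - xstar) + (1 - s) *\<^sub>R ((x k - \<alpha> *\<^sub>R R (x k) - xstar) + \<alpha> *\<^sub>R e k)"
        by (subst iter) (simp add: s_def b_def algebra_simps)
      then have "norm (x (Suc k) - xstar) \<le> s * D + (1 - s) * (norm (x k - xstar) + \<alpha> * \<epsilon> k)"
      proof -
        assume eq: "x (Suc k) - xstar = s *\<^sub>R (x 0 - xstar) + (1 - s) *\<^sub>R ((x k - \<alpha> *\<^sub>R R (x k) - xstar) + \<alpha> *\<^sub>R e k)"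
        have "norm (x (Suc k) - xstar) \<le> norm (s *\<^sub>R (x 0 - xstar)) + norm ((1 - s) *\<^sub>R ((x k - \<alpha> *\<^sub>R R (x k) - xstar) + \<alpha> *\<^sub>R e k))"
          unfolding eq by (rule norm_triangle_ineq)
        also have "\<dots> = s * D + (1 - s) * norm ((x k - \<alpha> *\<^sub>R R (x k) - xstar) + \<alpha> *\<^sub>R e k)"
          using s by (simp add: D_def)
        also have "norm ((x k - \<alpha> *\<^sub>R R (x k) - xstar) + \<alpha> *\<^sub>R e k) \<le> norm (x k - xstar) + \<alpha> * \<epsilon> k"
        proof -
          have "norm ((x k - \<alpha> *\<^sub>R R (x k) - xstar) + \<alpha> *\<^sub>R e k) \<le> norm (x k - \<alpha> *\<^sub>R R (x k) - xstar) + norm (\<alpha> *\<^sub>R e k)"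
            by (rule norm_triangle_ineq)
          also have "norm (\<alpha> *\<^sub>R e k) \<le> \<alpha> * \<epsilon> k" using a ee[of k] by (simp add: mult_left_mono)
          finally show ?thesis using nexp[of "x k"] by linarith
        qed
        then have "(1 - s) * norm ((x k - \<alpha> *\<^sub>R R (x k) - xstar) + \<alpha> *\<^sub>R e k) \<le> (1 - s) * (norm (x k - xstar) + \<alpha> * \<epsilon> k)"
          using s by (intro mult_left_mono) auto
        finally show ?thesis by simp
      qed
      also have "\<dots> \<le> s * D + (1 - s) * (D + \<alpha> / (b + 1) * S + \<alpha> * \<epsilon> k)"
        using Suc.IH s by (intro add_left_mono mult_left_mono) (auto simp: D_def S_def b_def)
      also have "\<dots> = D + \<alpha> / (b + 2) * (S + (b + 1) * \<epsilon> k)"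
      proof -
        have p1: "b + 1 \<noteq> 0" "b + 2 \<noteq> 0" using b by linarith+
        have h1: "1 - s = (b + 1) / (b + 2)" unfolding s_def using p1 by (simp add: field_simps)
        have h2: "(b + 1) / (b + 2) * (\<alpha> / (b + 1) * S) = \<alpha> / (b + 2) * S" using p1 by simp
        have h3: "(b + 1) / (b + 2) * (\<alpha> * \<epsilon> k) = \<alpha> / (b + 2) * ((b + 1) * \<epsilon> k)" by simp
        have "s * D + (1 - s) * (D + \<alpha> / (b + 1) * S + \<alpha> * \<epsilon> k)
            = D + (b + 1) / (b + 2) * (\<alpha> / (b + 1) * S) + (b + 1) / (b + 2) * (\<alpha> * \<epsilon> k)"
          unfolding h1[symmetric] by (simp add: algebra_simps)
        also have "\<dots> = D + \<alpha> / (b + 2) * (S + (b + 1) * \<epsilon> k)"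
          unfolding h2 h3 by (simp add: distrib_left)
        finally show ?thesis .
      qed
      finally show ?case by (simp add: D_def S_def b_def add.commute)
    qed
  qed
qed

lemma pointwise_max:
  assumes mx: "maximal_cohypomonotone_op \<rho> A"
    and rel: "\<And>y u. u \<in> A y \<Longrightarrow> inner (u0 - u) (y0 - y) \<ge> - \<rho> * (norm (u0 - u))\<^sup>2"
  shows "u0 \<in> A y0"
proof -
  define B where "B = A(y0 := insert u0 (A y0))"
  have coA: "cohypomonotone_op \<rho> A" using mx by (simp add: maximal_cohypomonotone_op_def)
  have "cohypomonotone_op \<rho> B"
    unfolding cohypomonotone_op_def
  proof (intro allI impI)
    fix x y u v assume u: "u \<in> B x" and v: "v \<in> B y"
    have sym: "inner (u - v) (x - y) = inner (v - u) (y - x)" "norm (u - v) = norm (v - u)"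
      by (simp_all add: inner_diff_left inner_diff_right norm_minus_commute)
    show "inner (u - v) (x - y) \<ge> - \<rho> * (norm (u - v))\<^sup>2"
    proof (cases "x = y0 \<and> u = u0")
      case True
      show ?thesis
      proof (cases "y = y0 \<and> v = u0")
        case True then show ?thesis using \<open>x = y0 \<and> u = u0\<close> by simp
      next
        case False
        then have "v \<in> A y" using v by (auto simp: B_def split: if_splits)
        then show ?thesis using rel True by auto
      qed
    next
      case False
      then have uA: "u \<in> A x" using u by (auto simp: B_def split: if_splits)
      show ?thesis
      proof (cases "y = y0 \<and> v = u0")
        case True
        then show ?thesis using rel[OF uA] sym by auto
      next
        case False
        then have "v \<in> A y" using v by (auto simp: B_def split: if_splits)
        then show ?thesis using coA uA by (auto simp: cohypomonotone_op_def)
      qed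
    qed
  qed
  moreover have "\<forall>x. A x \<subseteq> B x" by (auto simp: B_def)
  ultimately have "B = A" using mx by (simp add: maximal_cohypomonotone_op_def)
  then show ?thesis by (metis B_def fun_upd_same insertI1)
qed

lemma resolvent_exists:
  fixes A :: "'a::euclidean_space \<Rightarrow> 'a set"
  assumes mx: "maximal_cohypomonotone_op \<rho> A" and eta: "\<eta> > \<rho>" and u1: "u1 \<in> A y1"
  shows "\<exists>y u. u \<in> A y \<and> z - y = \<eta> *\<^sub>R u"
proof -
  have coA: "cohypomonotone_op \<rho> A" using mx by (simp add: maximal_cohypomonotone_op_def)
  define c where "c = \<eta> - \<rho>"
  have c: "c > 0" using eta by (simp add: c_def)
  define \<phi> where "\<phi> = (\<lambda>(y::'a, u::'a). (c *\<^sub>R u, y + \<rho> *\<^sub>R u - z))"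
  define S where "S = \<phi> ` {(y, u). u \<in> A y}"
  have key: "inner ((y - y') + \<rho> *\<^sub>R (u - u')) (c *\<^sub>R (u - u'))
      = c * (inner (u - u') (y - y') + \<rho> * (norm (u - u'))\<^sup>2)" for y y' u u' :: 'a
    by (simp add: inner_add_left inner_scaleR_left inner_scaleR_right inner_commute
        power2_norm_eq_inner algebra_simps)
  have "\<exists>x. (x, -x) \<in> S"
  proof (rule minty)
    show "S \<noteq> {}" using u1 by (auto simp: S_def)
  next
    fix p q assume "p \<in> S" "q \<in> S"
    then obtain y u y' u' where p: "p = \<phi> (y, u)" "u \<in> A y" and q: "q = \<phi> (y', u')" "u' \<in> A y'"
      by (auto simp: S_def)
    have "snd p - snd q = (y - y') + \<rho> *\<^sub>R (u - u')" "fst p - fst q = c *\<^sub>R (u - u')"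
      by (simp_all add: p q \<phi>_def algebra_simps)
    then have "inner (snd p - snd q) (fst p - fst q) = c * (inner (u - u') (y - y') + \<rho> * (norm (u - u'))\<^sup>2)"
      using key by simp
    moreover have "inner (u - u') (y - y') + \<rho> * (norm (u - u'))\<^sup>2 \<ge> 0"
    proof -
      have "inner (u - u') (y - y') \<ge> - \<rho> * (norm (u - u'))\<^sup>2"
        using coA p(2) q(2) unfolding cohypomonotone_op_def by blast
      then show ?thesis by linarith
    qed
    ultimately show "inner (snd p - snd q) (fst p - fst q) \<ge> 0" using c by simp
  next
    fix a b assume H: "\<And>p. p \<in> S \<Longrightarrow> inner (b - snd p) (a - fst p) \<ge> 0"
    define u0 where "u0 = a /\<^sub>R c"
    define y0 where "y0 = b + z - \<rho> *\<^sub>R u0"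
    have a: "a = c *\<^sub>R u0" using c by (simp add: u0_def)
    have b: "b = y0 + \<rho> *\<^sub>R u0 - z" by (simp add: y0_def)
    have "u0 \<in> A y0"
    proof (rule pointwise_max[OF mx])
      fix y u assume u: "u \<in> A y"
      then have "\<phi> (y, u) \<in> S" by (auto simp: S_def)
      from H[OF this] have "inner ((y0 - y) + \<rho> *\<^sub>R (u0 - u)) (c *\<^sub>R (u0 - u)) \<ge> 0"
        by (simp add: \<phi>_def a b algebra_simps)
      then have "c * (inner (u0 - u) (y0 - y) + \<rho> * (norm (u0 - u))\<^sup>2) \<ge> 0" using key[of y0 y u0 u] by linarith
      then have "inner (u0 - u) (y0 - y) + \<rho> * (norm (u0 - u))\<^sup>2 \<ge> 0"
        using c by (simp add: zero_le_mult_iff)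
      then show "inner (u0 - u) (y0 - y) \<ge> - \<rho> * (norm (u0 - u))\<^sup>2" by simp
    qed
    moreover have "(a, b) = \<phi> (y0, u0)" by (simp add: \<phi>_def a b)
    ultimately show "(a, b) \<in> S" by (auto simp: S_def)
  qed
  then obtain x y u where "u \<in> A y" "(x, -x) = \<phi> (y, u)" by (auto simp: S_def)
  then have "u \<in> A y" "x = c *\<^sub>R u" "-x = y + \<rho> *\<^sub>R u - z" by (auto simp: \<phi>_def)
  then have uy: "u \<in> A y" and xc: "x = c *\<^sub>R u" and hx: "-x = y + \<rho> *\<^sub>R u - z" by auto
  have "x = -(y + \<rho> *\<^sub>R u - z)" using hx by (metis minus_minus)
  then have "z - y = \<rho> *\<^sub>R u + x" by (simp add: algebra_simps)
  also have "\<dots> = \<rho> *\<^sub>R u + c *\<^sub>R u" by (simp add: xc)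
  also have "\<dots> = \<eta> *\<^sub>R u" by (simp add: c_def flip: scaleR_left_distrib)
  finally show ?thesis using uy by blast
qed


lemma resolvent_unique:
  fixes A :: "'a::real_inner \<Rightarrow> 'a set"
  assumes co: "cohypomonotone_op \<rho> A" and eta: "\<eta> > \<rho>"
    and 1: "u1 \<in> A y1" "z - y1 = \<eta> *\<^sub>R u1"
    and 2: "u2 \<in> A y2" "z - y2 = \<eta> *\<^sub>R u2"
  shows "y1 = y2"
proof -
  have c: "inner (u1 - u2) (y1 - y2) \<ge> - \<rho> * (norm (u1 - u2))\<^sup>2"
    using co 1 2 by (auto simp: cohypomonotone_op_def)
  have "y1 - y2 = - (\<eta> *\<^sub>R (u1 - u2))"
    using 1 2 by (simp add: algebra_simps)
  then have "inner (u1 - u2) (y1 - y2) = - \<eta> * (norm (u1 - u2))\<^sup>2"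
    by (simp add: power2_norm_eq_inner)
  with c have "(\<eta> - \<rho>) * (norm (u1 - u2))\<^sup>2 \<le> 0" by (simp add: algebra_simps)
  then have "(norm (u1 - u2))\<^sup>2 \<le> 0" using eta by (simp add: mult_le_0_iff)
  then have "u1 = u2" by simp
  then show ?thesis using 1 2 by (metis diff_diff_eq2 diff_add_cancel add_diff_cancel_left')
qed

lemma resolvent_prop:
  fixes A :: "'a::real_inner \<Rightarrow> 'a set"
  assumes co: "cohypomonotone_op \<rho> A" and eta: "\<eta> > \<rho>"
    and ex: "u \<in> A y" "z - y = \<eta> *\<^sub>R u"
  shows "resolvent (scale_op \<eta> A) z = y"
proof -
  have mem: "z - y' \<in> scale_op \<eta> A y' \<longleftrightarrow> (\<exists>u'\<in>A y'. z - y' = \<eta> *\<^sub>R u')" for y'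
    by (auto simp: scale_op_def)
  show ?thesis unfolding resolvent_def
  proof (rule the_equality)
    show "z - y \<in> scale_op \<eta> A y" using ex mem by blast
    fix y' assume "z - y' \<in> scale_op \<eta> A y'"
    then obtain u' where "u' \<in> A y'" "z - y' = \<eta> *\<^sub>R u'" using mem by blast
    then show "y' = y" using resolvent_unique[OF co eta _ _ ex] by blast
  qed
qed

theorem lemma2p5:
  fixes F :: "'a::euclidean_space \<Rightarrow> 'a" and G :: "'a \<Rightarrow> 'a set"
    and L \<rho> \<eta> \<alpha> :: real and x Jt :: "nat \<Rightarrow> 'a" and \<epsilon> :: "nat \<Rightarrow> real"
    and xstar :: 'a
  assumes lip: "L-lipschitz_on UNIV F"
    and maxmon: "maximal_monotone_op G"
    and solset: "\<exists>z. 0 \<in> sum_op F G z"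
    and cohypo: "maximal_cohypomonotone_op \<rho> (sum_op F G)"
    and rho_pos: "\<rho> > 0"
    and eta: "\<eta> > \<rho>"
    and alpha: "\<alpha> = 1 - \<rho> / \<eta>"
    and sol: "0 \<in> sum_op F G xstar"
    and iter: "\<And>k. x (Suc k) = (1 / (real k + 2)) *\<^sub>R x 0
                 + (1 - 1 / (real k + 2)) *\<^sub>R ((1 - \<alpha>) *\<^sub>R x k + \<alpha> *\<^sub>R Jt k)"
    and inexact: "\<And>k. norm (resolvent (scale_op \<eta> (sum_op F G)) (x k) - Jt k) \<le> \<epsilon> k"
    and eps_pos: "\<And>k. \<epsilon> k > 0"
  shows "(\<forall>K\<ge>1.
            real K * (real K + 1) / 4 * (norm (x K - resolvent (scale_op \<eta> (sum_op F G)) (x K)))\<^sup>2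
            - (real K + 1) / (real K * \<alpha>\<^sup>2) * (norm (xstar - x 0))\<^sup>2
          \<le> (\<Sum>k<K. (real k + 1) * (real k + 2) * (\<epsilon> k)\<^sup>2 / 2
                 + (real k + 1) * norm (x k - resolvent (scale_op \<eta> (sum_op F G)) (x k)) * \<epsilon> k))
       \<and> (\<forall>k. norm (x k - xstar) \<le> norm (x 0 - xstar)
                 + \<alpha> / (real k + 1) * (\<Sum>i<k. (real i + 1) * \<epsilon> i))"
proof -
  define A where "A = sum_op F G"
  define T where "T = resolvent (scale_op \<eta> A)"
  define R where "R z = z - T z" for z
  have co: "cohypomonotone_op \<rho> A" using cohypo by (simp add: A_def maximal_cohypomonotone_op_def)
  have eta0: "\<eta> > 0" using rho_pos eta by simp
  have "\<rho> / \<eta> < 1" using eta eta0 by simp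
  then have a: "\<alpha> > 0" using alpha by simp
  have Tp: "\<exists>u\<in>A (T z). z - T z = \<eta> *\<^sub>R u" for z
  proof -
    obtain y u where yu: "u \<in> A y" "z - y = \<eta> *\<^sub>R u"
      using resolvent_exists[OF cohypo[folded A_def] eta sol[folded A_def]] by blast
    have "T z = y" unfolding T_def by (rule resolvent_prop[OF co eta yu])
    then show ?thesis using yu by blast
  qed
  have Rs: "R xstar = 0"
  proof -
    have "T xstar = xstar" unfolding T_def
      by (rule resolvent_prop[OF co eta, of 0]) (use sol in \<open>simp_all add: A_def\<close>)
    then show ?thesis by (simp add: R_def)
  qed
  have coco: "inner (R z - R z') (z - z') \<ge> \<alpha> * (norm (R z - R z'))\<^sup>2" for z z'
  proof -
    obtain u where u: "u \<in> A (T z)" "z - T z = \<eta> *\<^sub>R u" using Tp by blast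
    obtain u' where u': "u' \<in> A (T z')" "z' - T z' = \<eta> *\<^sub>R u'" using Tp by blast
    define d where "d = u - u'"
    have Rd: "R z - R z' = \<eta> *\<^sub>R d" using u u' by (simp add: R_def d_def algebra_simps)
    have Td: "T z - T z' = (z - z') - \<eta> *\<^sub>R d" using Rd by (simp add: R_def algebra_simps)
    have c: "inner d (T z - T z') \<ge> - \<rho> * (norm d)\<^sup>2"
      using co u u' by (auto simp: cohypomonotone_op_def d_def)
    then have "inner d (z - z') - \<eta> * (norm d)\<^sup>2 \<ge> - \<rho> * (norm d)\<^sup>2"
      by (simp add: Td inner_diff_right power2_norm_eq_inner)
    then have i: "inner d (z - z') \<ge> (\<eta> - \<rho>) * (norm d)\<^sup>2" by (simp add: algebra_simps)
    have "\<alpha> * (norm (R z - R z'))\<^sup>2 = \<eta> * ((\<eta> - \<rho>) * (norm d)\<^sup>2)"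
      unfolding Rd alpha using eta0 by (simp add: power2_eq_square field_simps)
    also have "\<dots> \<le> \<eta> * inner d (z - z')" using i eta0 by simp
    also have "\<dots> = inner (R z - R z') (z - z')" by (simp add: Rd)
    finally show ?thesis .
  qed
  define e where "e k = Jt k - T (x k)" for k
  have iter': "x (Suc k) = (1 / (real k + 2)) *\<^sub>R x 0
                 + (1 - 1 / (real k + 2)) *\<^sub>R (x k - \<alpha> *\<^sub>R R (x k) + \<alpha> *\<^sub>R e k)" for k
  proof -
    have "(1 - \<alpha>) *\<^sub>R x k + \<alpha> *\<^sub>R Jt k = x k - \<alpha> *\<^sub>R R (x k) + \<alpha> *\<^sub>R e k"
      by (simp add: R_def e_def algebra_simps)
    then show ?thesis using iter[of k] by simp
  qed
  have ee: "norm (e k) \<le> \<epsilon> k" for k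
    using inexact[of k] by (simp add: e_def T_def A_def norm_minus_commute)
  note H = halpern[OF coco a Rs iter' ee]
  show ?thesis using H by (simp add: R_def T_def A_def)
qed

end
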